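(* Let $(X_n)$ be a finite Markov chain with transition matrix $P$ in which state $k$ is absorbing and, from every state, $k$ is reachable; all states other than $k$ are transient. Let $F^{k}=(I-P_{\mathcal T\mathcal T})^{-1}$, $\mathcal T$ the set of states other than $k$, be its fundamental matrix. Let $s,m,t$ be states different from $k$ with $s\neq t$, $m\neq t$ and $F^k_{st}>0$. Then the avoidance fundamental matrix satisfies $$F_{sm}^{\{t,\overline{k}\}}=F_{mt}^k\left(\frac{F_{sm}^k}{F_{st}^k}-\frac{F_{tm}^k}{F_{tt}^k}\right).$$
   Context: For a finite Markov chain with transition matrix $P$ and a set $\mathcal A$ of states made absorbing (their rows replaced by unit rows), with transient set $\mathcal T$ (complement of $\mathcal A$) from which $\mathcal A$ is reachable, the fundamental matrix is $F^{\mathcal A}=(I-P_{\mathcal T\mathcal T})^{-1}$; $F^{\mathcal A}_{sm}$ is the expected number of visits to $m$ starting from $s$ before absorption. For $t\in\mathcal A$, $Q_s^{\{t,\overline{\mathcal A\setminus\{t\}}\}}$ denotes the probability that the chain started at $s$ is absorbed at $t$ (i.e. the first absorbing state hit is $t$). For two states $t,k$, the avoidance fundamental matrix is defined by $F^{\{t,\overline{k}\}}_{sm}=F^{\{t,k\}}_{sm}\,\dfrac{Q_m^{\{t,\overline{k}\}}}{Q_s^{\{t,\overline{k}\}}}$, where $F^{\{t,k\}}$ is the fundamental matrix with absorbing set $\{t,k\}$ and $Q^{\{t,\overline k\}}_x$ is the probability that, with absorbing set $\{t,k\}$, the chain from $x$ is absorbed at $t$. *)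

theory Defs
  imports Complex_Main
begin

definition stochastic :: "('a::finite \<Rightarrow> 'a \<Rightarrow> real) \<Rightarrow> bool" where
  "stochastic P \<longleftrightarrow> (\<forall>i j. 0 \<le> P i j) \<and> (\<forall>i. (\<Sum>j\<in>UNIV. P i j) = 1)"

text \<open>Fundamental matrix for absorbing set A: the matrix F indexed by the transient set
  T = -A with (I - P_TT) F = I (entries outside T x T set to 0).\<close>
definition fund_mat :: "('a::finite \<Rightarrow> 'a \<Rightarrow> real) \<Rightarrow> 'a set \<Rightarrow> 'a \<Rightarrow> 'a \<Rightarrow> real" where
  "fund_mat P A = (THE F.
     (\<forall>s m. s \<notin> A \<and> m \<notin> A \<longrightarrow>
        (\<Sum>j\<in>-A. ((if s = j then 1 else 0) - P s j) * F j m) = (if s = m then 1 else 0)) \<and>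
     (\<forall>s m. s \<in> A \<or> m \<in> A \<longrightarrow> F s m = 0))"

text \<open>Probability that the chain started at x first enters the absorbing set A
  exactly at time n, and does so at state t.\<close>
fun absorb_at :: "('a::finite \<Rightarrow> 'a \<Rightarrow> real) \<Rightarrow> 'a set \<Rightarrow> 'a \<Rightarrow> 'a \<Rightarrow> nat \<Rightarrow> real" where
  "absorb_at P A t x 0 = (if x \<in> A \<and> x = t then 1 else 0)"
| "absorb_at P A t x (Suc n) =
     (if x \<in> A then 0 else (\<Sum>y\<in>UNIV. P x y * absorb_at P A t y n))"

definition absorb_prob :: "('a::finite \<Rightarrow> 'a \<Rightarrow> real) \<Rightarrow> 'a set \<Rightarrow> 'a \<Rightarrow> 'a \<Rightarrow> real" where
  "absorb_prob P A t x = (\<Sum>n. absorb_at P A t x n)"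

definition avoid_fund :: "('a::finite \<Rightarrow> 'a \<Rightarrow> real) \<Rightarrow> 'a \<Rightarrow> 'a \<Rightarrow> 'a \<Rightarrow> 'a \<Rightarrow> real" where
  "avoid_fund P t k s m =
     fund_mat P {t, k} s m * absorb_prob P {t, k} t m / absorb_prob P {t, k} t s"

end

theory Submission
  imports Defs "HOL-Analysis.Analysis"
begin

definition fm_spec :: "('a::finite \<Rightarrow> 'a \<Rightarrow> real) \<Rightarrow> 'a set \<Rightarrow> ('a \<Rightarrow> 'a \<Rightarrow> real) \<Rightarrow> bool" where
  "fm_spec P A F \<longleftrightarrow>
     (\<forall>s m. s \<notin> A \<and> m \<notin> A \<longrightarrow>
        (\<Sum>j\<in>-A. ((if s = j then 1 else 0) - P s j) * F j m) = (if s = m then 1 else 0)) \<and>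
     (\<forall>s m. s \<in> A \<or> m \<in> A \<longrightarrow> F s m = 0)"

lemma fund_mat_alt: "fund_mat P A = (THE F. fm_spec P A F)"
  by (simp add: fund_mat_def fm_spec_def)

definition Lmap :: "('a::finite \<Rightarrow> 'a \<Rightarrow> real) \<Rightarrow> 'a set \<Rightarrow> real^'a \<Rightarrow> real^'a" where
  "Lmap P A v = (\<chi> s. if s \<in> A then v$s else v$s - (\<Sum>j\<in>-A. P s j * v$j))"

lemma Lmap_linear: "linear (Lmap P A)"
  by (rule linearI) (simp_all add: Lmap_def vec_eq_iff sum.distrib algebra_simps sum_distrib_left)

lemma delta_sum:
  fixes f :: "'a::finite \<Rightarrow> real"
  assumes "s \<notin> A"
  shows "(\<Sum>j\<in>-A. ((if s = j then 1 else 0) - P s j) * f j) = f s - (\<Sum>j\<in>-A. P s j * f j)"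
proof -
  have "(\<Sum>j\<in>-A. ((if s = j then 1 else 0) - P s j) * f j)
      = (\<Sum>j\<in>-A. (if s = j then f j else 0) - P s j * f j)"
    by (rule sum.cong) (auto simp: algebra_simps)
  also have "\<dots> = f s - (\<Sum>j\<in>-A. P s j * f j)"
    using assms by (simp add: sum_subtractf)
  finally show ?thesis .
qed

lemma sum_compl_zero:
  fixes f :: "'a::finite \<Rightarrow> real"
  assumes "\<forall>a\<in>A. f a = 0"
  shows "(\<Sum>j\<in>-A. P s j * f j) = (\<Sum>j\<in>UNIV. P s j * f j)"
  by (rule sum.mono_neutral_left) (use assms in auto)

locale chain =
  fixes P :: "'a::finite \<Rightarrow> 'a \<Rightarrow> real" and k :: 'a
  assumes stoch: "stochastic P"
    and reach: "\<forall>i. (i, k) \<in> {(a, b). 0 < P a b}\<^sup>*"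
begin

lemma P_nonneg: "0 \<le> P i j" using stoch by (auto simp: stochastic_def)
lemma P_row: "(\<Sum>j\<in>UNIV. P i j) = 1" using stoch by (auto simp: stochastic_def)

lemma min_principle:
  assumes "k \<in> A" "\<forall>a\<in>A. x a = 0" "\<forall>s. s \<notin> A \<longrightarrow> (\<Sum>j\<in>UNIV. P s j * x j) \<le> x s"
  shows "0 \<le> x i"
proof (rule ccontr)
  assume neg: "\<not> 0 \<le> x i"
  define \<mu> where "\<mu> = Min (range x)"
  have \<mu>le: "\<mu> \<le> x j" for j unfolding \<mu>_def by simp
  have "\<mu> \<in> range x" unfolding \<mu>_def by (rule Min_in) auto
  then obtain s0 where s0: "x s0 = \<mu>" by auto
  have \<mu>neg: "\<mu> < 0" using \<mu>le[of i] neg by linarith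
  have step_eq: "x j = \<mu>" if "x i' = \<mu>" "0 < P i' j" for i' j
  proof -
    have "i' \<notin> A" using that assms(2) \<mu>neg by auto
    hence le: "(\<Sum>j\<in>UNIV. P i' j * x j) \<le> \<mu>" using assms(3) that(1) by auto
    have "(\<Sum>j\<in>UNIV. P i' j * (x j - \<mu>)) = (\<Sum>j\<in>UNIV. P i' j * x j) - (\<Sum>j\<in>UNIV. P i' j) * \<mu>"
      by (simp add: right_diff_distrib sum_subtractf sum_distrib_right)
    also have "\<dots> = (\<Sum>j\<in>UNIV. P i' j * x j) - \<mu>" by (simp add: P_row)
    finally have le2: "(\<Sum>j\<in>UNIV. P i' j * (x j - \<mu>)) \<le> 0" using le by linarith
    have nn: "\<forall>j\<in>UNIV. 0 \<le> P i' j * (x j - \<mu>)" using P_nonneg \<mu>le by simp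
    hence "(\<Sum>j\<in>UNIV. P i' j * (x j - \<mu>)) = 0" using le2
      by (intro antisym le2 sum_nonneg) auto
    hence "\<forall>j\<in>UNIV. P i' j * (x j - \<mu>) = 0" using nn sum_nonneg_eq_0_iff[of UNIV "\<lambda>j. P i' j * (x j - \<mu>)"] by simp
    thus ?thesis using that(2) by (metis UNIV_I diff_self eq_iff_diff_eq_0 less_irrefl mult_eq_0_iff)
  qed
  have "(s0, k) \<in> {(a, b). 0 < P a b}\<^sup>*" using reach by auto
  hence "x k = \<mu>"
  proof (induction rule: rtrancl_induct)
    case base show ?case using s0 .
  next
    case (step y z) thus ?case using step_eq by auto
  qed
  then show False using assms(1,2) \<mu>neg by auto
qed

lemma harmonic_zero:
  assumes "k \<in> A" "\<forall>a\<in>A. d a = 0" "\<forall>s. s \<notin> A \<longrightarrow> d s = (\<Sum>j\<in>UNIV. P s j * d j)"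
  shows "d i = 0"
proof -
  have "0 \<le> d i" by (rule min_principle[OF assms(1,2)]) (use assms(3) in auto)
  moreover have "0 \<le> - d i"
    by (rule min_principle[of A "\<lambda>j. - d j", OF assms(1)]) (use assms(2,3) in \<open>auto simp: sum_negf\<close>)
  ultimately show ?thesis by linarith
qed

lemma fm_exists:
  assumes "k \<in> A"
  shows "\<exists>F. fm_spec P A F"
proof -
  have inj: "inj (Lmap P A)"
    unfolding linear_inj_iff_eq_0[OF Lmap_linear]
  proof (intro allI impI)
    fix v assume "Lmap P A v = 0"
    hence e: "\<And>s. (if s \<in> A then v$s else v$s - (\<Sum>j\<in>-A. P s j * v$j)) = 0"
      by (simp add: Lmap_def vec_eq_iff)
    have z: "\<forall>a\<in>A. v$a = 0" using e by (metis)
    have "v$i = 0" for i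
    proof (rule harmonic_zero[OF assms z])
      show "\<forall>s. s \<notin> A \<longrightarrow> v $ s = (\<Sum>j\<in>UNIV. P s j * v $ j)"
        using e sum_compl_zero[OF z] by (metis eq_iff_diff_eq_0)
    qed
    thus "v = 0" by (simp add: vec_eq_iff)
  qed
  have surj: "surj (Lmap P A)"
    using linear_injective_imp_surjective[OF Lmap_linear inj] by simp
  define V where "V m = (SOME v. Lmap P A v = (\<chi> s. if s = m then 1 else 0))" for m
  have V: "Lmap P A (V m) = (\<chi> s. if s = m then 1 else 0)" for m
    unfolding V_def by (rule someI_ex) (use surj in \<open>metis surjD\<close>)
  define F where "F s m = (if s \<in> A \<or> m \<in> A then 0 else V m $ s)" for s m
  have "fm_spec P A F"
    unfolding fm_spec_def
  proof (intro conjI allI impI)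
    fix s m assume sm: "s \<notin> A \<and> m \<notin> A"
    have "(\<Sum>j\<in>-A. ((if s = j then 1 else 0) - P s j) * F j m)
        = (\<Sum>j\<in>-A. ((if s = j then 1 else 0) - P s j) * V m $ j)"
      by (rule sum.cong) (use sm in \<open>auto simp: F_def\<close>)
    also have "\<dots> = V m $ s - (\<Sum>j\<in>-A. P s j * V m $ j)" using sm by (intro delta_sum) simp
    also have "\<dots> = Lmap P A (V m) $ s" using sm by (simp add: Lmap_def)
    also have "\<dots> = (if s = m then 1 else 0)" by (simp add: V)
    finally show "(\<Sum>j\<in>-A. ((if s = j then 1 else 0) - P s j) * F j m) = (if s = m then 1 else 0)" .
  next
    fix s m assume "s \<in> A \<or> m \<in> A" thus "F s m = 0" by (auto simp: F_def)
  qed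
  thus ?thesis by blast
qed

lemma fm_unique:
  assumes "k \<in> A" "fm_spec P A F" "fm_spec P A G"
  shows "F = G"
proof (intro ext)
  fix s m
  show "F s m = G s m"
  proof (cases "m \<in> A")
    case True thus ?thesis using assms(2,3) by (simp add: fm_spec_def)
  next
    case mA: False
    define d where "d j = F j m - G j m" for j
    have z: "\<forall>a\<in>A. d a = 0" using assms(2,3) by (simp add: fm_spec_def d_def)
    have "d s = 0"
    proof (rule harmonic_zero[OF assms(1) z], intro allI impI)
      fix i assume iA: "i \<notin> A"
      have a: "F i m - (\<Sum>j\<in>-A. P i j * F j m) = (if i = m then 1 else 0)"
        using assms(2) iA mA delta_sum[OF iA, of P "\<lambda>j. F j m"] by (simp add: fm_spec_def)
      have b: "G i m - (\<Sum>j\<in>-A. P i j * G j m) = (if i = m then 1 else 0)"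
        using assms(3) iA mA delta_sum[OF iA, of P "\<lambda>j. G j m"] by (simp add: fm_spec_def)
      have "d i = (\<Sum>j\<in>-A. P i j * d j)"
        using a b by (simp add: d_def right_diff_distrib sum_subtractf)
      thus "d i = (\<Sum>j\<in>UNIV. P i j * d j)" using sum_compl_zero[OF z] by simp
    qed
    thus ?thesis by (simp add: d_def)
  qed
qed

lemma fm_spec_fund:
  assumes "k \<in> A"
  shows "fm_spec P A (fund_mat P A)"
proof -
  have "\<exists>!F. fm_spec P A F" using fm_exists[OF assms] fm_unique[OF assms] by blast
  thus ?thesis unfolding fund_mat_alt by (rule theI')
qed

lemma fund_eq:
  assumes "k \<in> A" "fm_spec P A G"
  shows "fund_mat P A = G"
  using fm_unique[OF assms(1) fm_spec_fund[OF assms(1)] assms(2)] .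

lemma row_form:
  assumes "k \<in> A" "s \<notin> A" "m \<notin> A"
  shows "fund_mat P A s m = (if s = m then 1 else 0) + (\<Sum>j\<in>UNIV. P s j * fund_mat P A j m)"
proof -
  let ?F = "fund_mat P A"
  have sp: "fm_spec P A ?F" by (rule fm_spec_fund[OF assms(1)])
  have z: "\<forall>a\<in>A. ?F a m = 0" using sp by (simp add: fm_spec_def)
  have "?F s m - (\<Sum>j\<in>-A. P s j * ?F j m) = (if s = m then 1 else 0)"
    using sp assms delta_sum[OF assms(2), of P "\<lambda>j. ?F j m"] by (simp add: fm_spec_def)
  thus ?thesis using sum_compl_zero[OF z, of P s] by simp
qed

lemma fund_zero: "s \<in> A \<or> m \<in> A \<Longrightarrow> k \<in> A \<Longrightarrow> fund_mat P A s m = 0"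
  using fm_spec_fund[of A] unfolding fm_spec_def by blast

lemma fm_spec_intro:
  assumes "\<And>s m. s \<notin> A \<Longrightarrow> m \<notin> A \<Longrightarrow> G s m = (if s = m then 1 else 0) + (\<Sum>j\<in>UNIV. P s j * G j m)"
    and "\<And>s m. s \<in> A \<or> m \<in> A \<Longrightarrow> G s m = 0"
  shows "fm_spec P A G"
  unfolding fm_spec_def
proof (intro conjI allI impI)
  fix s m assume sm: "s \<notin> A \<and> m \<notin> A"
  have z: "\<forall>a\<in>A. G a m = 0" using assms(2) by auto
  show "(\<Sum>j\<in>-A. ((if s = j then 1 else 0) - P s j) * G j m) = (if s = m then 1 else 0)"
    using delta_sum[of s A P "\<lambda>j. G j m"] sm assms(1)[of s m] sum_compl_zero[OF z, of P s] by simp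
qed (use assms(2) in auto)

lemma fund_nonneg:
  assumes "k \<in> A"
  shows "0 \<le> fund_mat P A s m"
proof (cases "m \<in> A")
  case True thus ?thesis using fund_zero[OF _ assms] by simp
next
  case False
  show ?thesis
  proof (rule min_principle[OF assms, of "\<lambda>j. fund_mat P A j m"])
    show "\<forall>a\<in>A. fund_mat P A a m = 0" using fund_zero[OF _ assms] by simp
    show "\<forall>s. s \<notin> A \<longrightarrow> (\<Sum>j\<in>UNIV. P s j * fund_mat P A j m) \<le> fund_mat P A s m"
      using row_form[OF assms _ False] by (auto simp: if_split)
  qed
qed

theorem main_loc:
  assumes "P k k = 1"
    and "s \<noteq> k" "m \<noteq> k" "t \<noteq> k" "s \<noteq> t" "m \<noteq> t"
    and pos: "fund_mat P {k} s t > 0"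
  shows "avoid_fund P t k s m =
    fund_mat P {k} m t *
      (fund_mat P {k} s m / fund_mat P {k} s t - fund_mat P {k} t m / fund_mat P {k} t t)"
proof -
  define F where "F = fund_mat P {k}"
  have kk: "k \<in> {k}" by simp
  have kA: "k \<in> {t, k}" by simp
  have Frow: "\<And>x y. x \<noteq> k \<Longrightarrow> y \<noteq> k \<Longrightarrow> F x y = (if x = y then 1 else 0) + (\<Sum>j\<in>UNIV. P x j * F j y)"
    unfolding F_def using row_form[OF kk] by simp
  have Fk: "\<And>y. F k y = 0" "\<And>y. F y k = 0" unfolding F_def using fund_zero[OF _ kk] by auto
  have Fnn: "\<And>x y. 0 \<le> F x y" unfolding F_def using fund_nonneg[OF kk] by simp
  have Ftt: "1 \<le> F t t"
  proof -
    have "0 \<le> (\<Sum>j\<in>UNIV. P t j * F j t)" using P_nonneg Fnn by (intro sum_nonneg) simp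
    thus ?thesis using Frow[of t t] assms(4) by simp
  qed
  have Fst: "0 < F s t" using pos F_def by simp
  define G where "G x y = (if x \<in> {t, k} \<or> y \<in> {t, k} then 0 else F x y - F x t * F t y / F t t)" for x y
  have HG: "G j y = F j y - F j t * F t y / F t t" if "y \<notin> {t, k}" for j y
    using that Ftt Fk by (auto simp: G_def)
  have "fm_spec P {t, k} G"
  proof (rule fm_spec_intro)
    fix x y assume x: "x \<notin> {t, k}" and y: "y \<notin> {t, k}"
    have "(\<Sum>j\<in>UNIV. P x j * G j y) = (\<Sum>j\<in>UNIV. P x j * F j y) - (\<Sum>j\<in>UNIV. P x j * F j t) * (F t y / F t t)"
      using HG[OF y] by (simp add: right_diff_distrib sum_subtractf sum_distrib_right sum_divide_distrib mult.assoc)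
    also have "\<dots> = (F x y - (if x = y then 1 else 0)) - F x t * (F t y / F t t)"
      using Frow[of x y] Frow[of x t] x y assms(4) by simp
    finally show "G x y = (if x = y then 1 else 0) + (\<Sum>j\<in>UNIV. P x j * G j y)"
      using x y by (simp add: G_def)
  next
    fix x y assume "x \<in> {t, k} \<or> y \<in> {t, k}" thus "G x y = 0" by (simp add: G_def)
  qed
  hence Geq: "fund_mat P {t, k} = G" by (rule fund_eq[OF kA])
  define A where "A = {t, k}"
  define h where "h x = (if x = k then 0 else F x t / F t t)" for x
  have hA: "h t = 1" "h k = 0" using Ftt assms(4) by (auto simp: h_def)
  have hnn: "0 \<le> h x" for x using Fnn Ftt by (simp add: h_def)
  have hharm: "h x = (\<Sum>y\<in>UNIV. P x y * h y)" if "x \<notin> A" for x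
  proof -
    have hF: "h y = F y t / F t t" for y using Fk by (simp add: h_def)
    have "(\<Sum>y\<in>UNIV. P x y * h y) = (\<Sum>y\<in>UNIV. P x y * F y t) / F t t"
      by (simp add: hF sum_divide_distrib)
    also have "\<dots> = F x t / F t t" using Frow[of x t] that assms(4) by (simp add: A_def)
    finally show ?thesis using that by (simp add: h_def A_def)
  qed
  define a where "a x n = absorb_at P A t x n" for x n
  define S where "S N x = (\<Sum>n<N. a x n)" for N x
  have ann: "0 \<le> a x n" for x n
    unfolding a_def
  proof (induction n arbitrary: x)
    case 0 show ?case by simp
  next
    case (Suc n) thus ?case using P_nonneg by (simp add: sum_nonneg)
  qed
  have Srec: "S (Suc N) x = (if x \<in> A \<and> x = t then 1 else 0) + (if x \<in> A then 0 else (\<Sum>y\<in>UNIV. P x y * S N y))" for N x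
  proof -
    have "S (Suc N) x = a x 0 + (\<Sum>n<N. a x (Suc n))" unfolding S_def by (rule sum.lessThan_Suc_shift)
    also have "(\<Sum>n<N. a x (Suc n)) = (if x \<in> A then 0 else (\<Sum>y\<in>UNIV. P x y * S N y))"
      by (simp add: a_def S_def sum_distrib_left sum.swap[of _ "{..<N}"])
    finally show ?thesis by (simp add: a_def)
  qed
  have Sle: "S N x \<le> h x" for N x
  proof (induction N arbitrary: x)
    case 0 show ?case using hnn by (simp add: S_def)
  next
    case (Suc N)
    show ?case
    proof (cases "x \<in> A")
      case True thus ?thesis using Srec[of N x] hA assms(4) by (auto simp: A_def)
    next
      case False
      have "(\<Sum>y\<in>UNIV. P x y * S N y) \<le> (\<Sum>y\<in>UNIV. P x y * h y)"
        using Suc P_nonneg by (intro sum_mono mult_left_mono) auto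
      thus ?thesis using Srec[of N x] hharm[OF False] False by simp
    qed
  qed
  have summ: "summable (a x)" for x
    by (rule summableI_nonneg_bounded[where x="h x"]) (use ann Sle in \<open>auto simp: S_def\<close>)
  define L where "L x = absorb_prob P A t x" for x
  have lim: "(\<lambda>N. S N x) \<longlonglongrightarrow> L x" for x
    unfolding S_def L_def absorb_prob_def using summable_LIMSEQ[OF summ[of x]] by (simp add: a_def[abs_def])
  have Lrec: "L x = (if x \<in> A \<and> x = t then 1 else 0) + (if x \<in> A then 0 else (\<Sum>y\<in>UNIV. P x y * L y))" for x
  proof -
    have "(\<lambda>N. S (Suc N) x) \<longlonglongrightarrow> L x" using lim[of x] by (rule LIMSEQ_Suc)
    moreover have "(\<lambda>N. S (Suc N) x) \<longlonglongrightarrow> (if x \<in> A \<and> x = t then 1 else 0) + (if x \<in> A then 0 else (\<Sum>y\<in>UNIV. P x y * L y))"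
      unfolding Srec by (cases "x \<in> A") (simp_all, intro tendsto_intros lim)
    ultimately show ?thesis by (rule LIMSEQ_unique)
  qed
  have Lh: "L x = h x" for x
  proof -
    have "(\<lambda>y. h y - L y) x = 0"
    proof (rule harmonic_zero)
      show "k \<in> A" by (simp add: A_def)
      show "\<forall>a\<in>A. h a - L a = 0" using Lrec hA assms(4) by (auto simp: A_def)
      show "\<forall>s. s \<notin> A \<longrightarrow> h s - L s = (\<Sum>j\<in>UNIV. P s j * (h j - L j))"
        using Lrec hharm by (simp add: right_diff_distrib sum_subtractf)
    qed
    thus ?thesis by simp
  qed
  have Qs: "absorb_prob P {t, k} t s = F s t / F t t" using Lh[of s] assms(2) by (simp add: L_def A_def h_def)
  have Qm: "absorb_prob P {t, k} t m = F m t / F t t" using Lh[of m] assms(3) by (simp add: L_def A_def h_def)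
  have Gsm: "fund_mat P {t, k} s m = F s m - F s t * F t m / F t t"
    using Geq assms by (simp add: G_def)
  show ?thesis
    unfolding avoid_fund_def Qs Qm Gsm F_def[symmetric]
    using Fst Ftt by (simp add: field_simps)
qed

end

theorem mainTheorem1:
  fixes P :: "'a::finite \<Rightarrow> 'a \<Rightarrow> real" and k s m t :: 'a
  assumes "stochastic P"
    and "P k k = 1"
    and "\<forall>i. (i, k) \<in> {(a, b). 0 < P a b}\<^sup>*"
    and "s \<noteq> k" "m \<noteq> k" "t \<noteq> k" "s \<noteq> t" "m \<noteq> t"
    and "fund_mat P {k} s t > 0"
  shows "avoid_fund P t k s m =
    fund_mat P {k} m t *
      (fund_mat P {k} s m / fund_mat P {k} s t - fund_mat P {k} t m / fund_mat P {k} t t)"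
proof -
  interpret chain P k using assms(1,3) by unfold_locales
  show ?thesis using main_loc assms by blast
qed

end
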